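(* For every integer $N\ge 1$, the total area of all ternary paths of length $3N$ equals $$\sum_{k=0}^{N-1}3^{k+1}\binom{3N-k}{N-1-k}.$$
   Context: A ternary path of length $3N$ is a lattice path $(0,c_0),(1,c_1),\dots,(3N,c_{3N})$ with $c_0=c_{3N}=0$, steps $(1,1)$ or $(1,-2)$, and all $c_j\ge 0$. Its area is $c_0+c_1+\cdots+c_{3N}$. The total area is the sum of the areas over all such paths of length $3N$. *)

theory Defs
  imports Main
begin

(* A path of length m is encoded by its list of step increments; each step is
   (1,1) (increment 1) or (1,-2) (increment -2). Heights: c_j = sum of first j steps. *)

definition height :: "int list \<Rightarrow> nat \<Rightarrow> int" where
  "height s j = sum_list (take j s)"

definition ternary_paths :: "nat \<Rightarrow> int list set" where
  "ternary_paths N = {s. length s = 3 * N \<and> set s \<subseteq> {1, -2}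
      \<and> (\<forall>j\<le>3 * N. height s j \<ge> 0) \<and> height s (3 * N) = 0}"

definition path_area :: "int list \<Rightarrow> int" where
  "path_area s = (\<Sum>j\<le>length s. height s j)"

definition total_area :: "nat \<Rightarrow> int" where
  "total_area N = (\<Sum>s\<in>ternary_paths N. path_area s)"

end

theory Submission
  imports Defs
begin

declare binomial_Suc_Suc[simp del]

fun L :: "nat \<Rightarrow> nat \<Rightarrow> int" where
  "L n 0 = 1"
| "L n (Suc m) = int (Suc n choose Suc m) + 2 * L n m"

lemma L_A: "L (Suc n) (Suc m) = L n (Suc m) + L n m"
  by (induction m) (simp_all add: algebra_simps binomial_Suc_Suc)

definition R :: "nat \<Rightarrow> nat \<Rightarrow> int" where
  "R n m = (\<Sum>k\<le>m. 3^k * int ((n-k) choose (m-k)))"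

lemma R_rec: "R (Suc n) (Suc m) = int (Suc n choose Suc m) + 3 * R n m"
proof -
  have "R (Suc n) (Suc m) = int (Suc n choose Suc m) + (\<Sum>k\<le>m. 3^(Suc k) * int ((Suc n - Suc k) choose (Suc m - Suc k)))"
    unfolding R_def by (subst sum.atMost_Suc_shift) simp
  also have "\<dots> = int (Suc n choose Suc m) + 3 * R n m"
    unfolding R_def by (simp add: sum_distrib_left mult.assoc)
  finally show ?thesis .
qed

lemma L_R: "m \<le> n \<Longrightarrow> L n m = R n m"
proof (induction m arbitrary: n)
  case 0 then show ?case by (simp add: R_def)
next
  case (Suc m)
  then obtain n' where n: "n = Suc n'" and "m \<le> n'" by (cases n) auto
  have "L (Suc n') (Suc m) = int (Suc n' choose Suc m) + 3 * L n' m"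
    by (subst L_A) simp
  then show ?case using Suc.IH[OF \<open>m \<le> n'\<close>] n R_rec by simp
qed

definition W :: "nat \<Rightarrow> nat \<Rightarrow> int" where
  "W n d = (if d = 0 then 0 else L n (d - 1))"

definition fc :: "nat \<Rightarrow> nat \<Rightarrow> int" where
  "fc d h = (if d = 0 then 1 else int ((3*d+h) choose d) - 2 * int ((3*d+h) choose (d-1)))"

definition Pc :: "nat \<Rightarrow> nat \<Rightarrow> int" where
  "Pc d h = 3 * int (h+1) * W (3*d+h) d + int ((h+1) choose 2) * int ((3*d+h+1) choose d)"

lemma choose_3d: "((3*e+2) choose (Suc e)) = 2 * ((3*e+2) choose e)"
proof -
  have a: "Suc (3*e+1) * ((3*e+1) choose e) = ((3*e+2) choose Suc e) * Suc e"
    using Suc_times_binomial_eq[of "3*e+1" e] by simp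
  have b: "(3*e+2 - e) * ((3*e+2) choose e) = (3*e+2) * ((3*e+2 - 1) choose e)"
    by (rule binomial_absorb_comp)
  have "((3*e+2) choose Suc e) * Suc e = (2 * ((3*e+2) choose e)) * Suc e"
    using a b by (simp add: algebra_simps)
  then show ?thesis by (metis mult_right_cancel nat.distinct(1))
qed

lemma fc_rec:
  assumes "3*d+h \<ge> 1"
  shows "fc d h = (if h \<ge> 1 then fc d (h-1) else 0) + (if d \<ge> 1 then fc (d-1) (h+2) else 0)"
proof (cases d)
  case 0
  with assms show ?thesis by (simp add: fc_def)
next
  case (Suc e)
  show ?thesis
  proof (cases h)
    case 0
    have p1: "(3*e+3) choose (Suc e) = ((3*e+2) choose e) + ((3*e+2) choose Suc e)"
      using binomial_Suc_Suc[of "3*e+2" e] by (simp add: eval_nat_numeral)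
    show ?thesis
    proof (cases e)
      case 0
      with Suc \<open>h=0\<close> show ?thesis by (simp add: fc_def numeral_eq_Suc)
    next
      case (Suc e')
      have p2: "(3*e+3) choose e = ((3*e+2) choose e') + ((3*e+2) choose e)"
        using binomial_Suc_Suc[of "3*e+2" e'] Suc by (simp add: eval_nat_numeral)
      show ?thesis using p1 p2 choose_3d[of e] \<open>d = Suc e\<close> \<open>h=0\<close> Suc
        by (simp add: fc_def algebra_simps)
    qed
  next
    case (Suc g)
    define n' where "n' = 3*d+g"
    have hn: "3*d+h = Suc n'" using Suc n'_def by simp
    have f1: "fc d h = int (Suc n' choose Suc e) - 2 * int (Suc n' choose e)"
      unfolding fc_def hn using \<open>d = Suc e\<close> by simp
    have f2: "fc d g = int (n' choose Suc e) - 2 * int (n' choose e)"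
      using n'_def \<open>d = Suc e\<close> by (simp add: fc_def)
    have p1: "Suc n' choose Suc e = (n' choose e) + (n' choose Suc e)"
      by (rule binomial_Suc_Suc)
    show ?thesis
    proof (cases e)
      case 0
      have f3: "fc e (h+2) = 1" using 0 by (simp add: fc_def)
      show ?thesis using f1 f2 f3 p1 Suc 0 \<open>d = Suc e\<close> by simp
    next
      case (Suc e')
      have f3: "fc e (h+2) = int (n' choose e) - 2 * int (n' choose e')"
      proof -
        have e3: "3*e+(h+2) = n'" using Suc \<open>h = Suc g\<close> n'_def \<open>d = Suc e\<close> by simp
        show ?thesis unfolding fc_def e3 using Suc by simp
      qed
      have p2: "Suc n' choose e = (n' choose e') + (n' choose e)"
        using Suc binomial_Suc_Suc by simp
      show ?thesis using f1 f2 f3 p1 p2 \<open>h = Suc g\<close> \<open>d = Suc e\<close> by simp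
    qed
  qed
qed

lemma L_A': "L (Suc n) m = L n m + W n m"
proof (cases m)
  case (Suc k)
  show ?thesis unfolding Suc L_A W_def by simp
qed (simp add: W_def)

lemma L_B: "L n m = int (Suc n choose m) + 2 * W n m"
  by (cases m) (simp_all add: W_def)

lemma c2: "int (Suc h choose 2) = int (h choose 2) + int h"
proof -
  have "Suc h choose Suc 1 = (h choose 1) + (h choose Suc 1)" by (rule binomial_Suc_Suc)
  then show ?thesis by (simp add: numeral_2_eq_2)
qed

lemma Pc_rec:
  assumes "3*d+h \<ge> 1"
  shows "Pc d h = int h * fc d h + (if h \<ge> 1 then Pc d (h-1) else 0) + (if d \<ge> 1 then Pc (d-1) (h+2) else 0)"
proof -
  obtain n' where hn: "3*d+h = Suc n'" using assms by (cases "3*d+h") auto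
  have Th: "(if h \<ge> 1 then Pc d (h-1) else 0) = 3 * int h * W n' d + int (h choose 2) * int (Suc n' choose d)"
  proof (cases h)
    case 0 then show ?thesis by simp
  next
    case (Suc g)
    have "3*d+g = n'" using hn Suc by simp
    then show ?thesis using Suc unfolding Pc_def by simp
  qed
  have P0: "Pc d h = 3 * int (h+1) * W (Suc n') d + int ((h+1) choose 2) * int (Suc (Suc n') choose d)"
    unfolding Pc_def hn by simp
  have c1: "int ((h+1) choose 2) = int (h choose 2) + int h" using c2 by simp
  show ?thesis
  proof (cases d)
    case 0
    then show ?thesis using Th P0 c1 by (simp add: W_def fc_def algebra_simps)
  next
    case (Suc e)
    have e3: "3*e+(h+2) = n'" using Suc hn by simp
    have Pe: "Pc e (h+2) = 3 * int (h+3) * W n' e + int ((h+3) choose 2) * int (Suc n' choose e)"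
      unfolding Pc_def e3 by (simp add: numeral_3_eq_3)
    have c3: "int ((h+3) choose 2) = int ((h+1) choose 2) + int (h+1) + int (h+2)"
      using c2[of "h+2"] c2[of "h+1"] by (simp add: numeral_3_eq_3)
    have fd: "fc d h = int (Suc n' choose d) - 2 * int (Suc n' choose e)"
      unfolding fc_def hn using Suc by simp
    have WX: "W (Suc n') d = L n' e + W n' e" using Suc L_A' by (simp add: W_def)
    have Wd: "W n' d = L n' e" using Suc by (simp add: W_def)
    have X: "L n' e = int (Suc n' choose e) + 2 * W n' e" by (rule L_B)
    have pas: "Suc (Suc n') choose d = (Suc n' choose e) + (Suc n' choose d)"
      using Suc binomial_Suc_Suc by simp
    have pasi: "int (Suc (Suc n') choose d) = int (Suc n' choose e) + int (Suc n' choose d)"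
      using pas by simp
    have goal: "(if d \<ge> 1 then Pc (d-1) (h+2) else 0) = Pc e (h+2)" using Suc by simp
    show ?thesis unfolding goal Th P0 Pe fd WX Wd pasi c3 c1 X
      by (simp add: algebra_simps)
  qed
qed


definition pre :: "nat \<Rightarrow> int \<Rightarrow> int list set" where
  "pre n h = {s. length s = n \<and> set s \<subseteq> {1, -2} \<and> (\<forall>j\<le>n. height s j \<ge> 0) \<and> height s n = h}"

lemma height_snoc: "j \<le> length s \<Longrightarrow> height (s @ [x]) j = height s j"
  by (simp add: height_def)

lemma height_snoc_end: "height (s @ [x]) (Suc (length s)) = height s (length s) + x"
  by (simp add: height_def)

lemma area_snoc: "path_area (s @ [x]) = path_area s + height (s @ [x]) (Suc (length s))"
proof -
  have "path_area (s @ [x]) = (\<Sum>j\<le>length s. height (s @ [x]) j) + height (s @ [x]) (Suc (length s))"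
    by (simp add: path_area_def)
  also have "(\<Sum>j\<le>length s. height (s @ [x]) j) = path_area s"
    unfolding path_area_def by (rule sum.cong) (auto simp: height_snoc)
  finally show ?thesis .
qed

lemma sum_list_le: "set s \<subseteq> {1, -2} \<Longrightarrow> sum_list s \<le> int (length s)"
  by (induction s) auto

lemma pre_neg: "h < 0 \<Longrightarrow> pre n h = {}"
  by (auto simp: pre_def)

lemma pre_big: "h > int n \<Longrightarrow> pre n h = {}"
proof -
  assume a: "h > int n"
  { fix s assume "s \<in> pre n h"
    then have "length s = n" "set s \<subseteq> {1,-2}" "height s n = h" by (auto simp: pre_def)
    then have "h \<le> int n" using sum_list_le[of s] by (simp add: height_def)
  }
  with a show ?thesis by force
qed

lemma pre_fin: "finite (pre n h)"
proof -
  have "pre n h \<subseteq> {s. set s \<subseteq> {1,-2} \<and> length s = n}" by (auto simp: pre_def)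
  moreover have "finite {s. set s \<subseteq> {1,-2::int} \<and> length s = n}"
    by (rule finite_lists_length_eq) simp
  ultimately show ?thesis by (rule finite_subset)
qed

lemma pre_0: "pre 0 h = (if h = 0 then {[]} else {})"
  by (auto simp: pre_def height_def)

lemma pre_Suc:
  assumes "h \<ge> 0"
  shows "pre (Suc n) h = (\<lambda>s. s @ [1]) ` pre n (h-1) \<union> (\<lambda>s. s @ [-2]) ` pre n (h+2)"
proof
  show "pre (Suc n) h \<subseteq> (\<lambda>s. s @ [1]) ` pre n (h-1) \<union> (\<lambda>s. s @ [-2]) ` pre n (h+2)"
  proof
    fix s assume s: "s \<in> pre (Suc n) h"
    then have len: "length s = Suc n" and st: "set s \<subseteq> {1,-2}"
      and hj: "\<forall>j\<le>Suc n. height s j \<ge> 0" and he: "height s (Suc n) = h"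
      by (auto simp: pre_def)
    define t where "t = butlast s"
    define x where "x = last s"
    have sx: "s = t @ [x]" using len unfolding t_def x_def
      by (metis append_butlast_last_id list.size(3) nat.distinct(1))
    have lt: "length t = n" using len t_def by simp
    have x: "x \<in> {1,-2}" using st sx by auto
    have tt: "set t \<subseteq> {1,-2}" using st sx by auto
    have ht: "\<forall>j\<le>n. height t j \<ge> 0" using hj sx lt height_snoc by (metis le_SucI)
    have hte: "height t n + x = h" using he sx lt height_snoc_end by metis
    show "s \<in> (\<lambda>s. s @ [1]) ` pre n (h-1) \<union> (\<lambda>s. s @ [-2]) ` pre n (h+2)"
    proof (cases "x = 1")
      case True
      then have "t \<in> pre n (h-1)" using lt tt ht hte by (auto simp: pre_def)
      then show ?thesis using sx True by blast
    next
      case False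
      then have "x = -2" using x by auto
      then have "t \<in> pre n (h+2)" using lt tt ht hte by (auto simp: pre_def)
      then show ?thesis using sx \<open>x = -2\<close> by blast
    qed
  qed
next
  have gen: "t @ [x] \<in> pre (Suc n) h" if t: "t \<in> pre n (h - x)" and x: "x \<in> {1,-2}" for t x
  proof -
    have lt: "length t = n" and tt: "set t \<subseteq> {1,-2}" and ht: "\<forall>j\<le>n. height t j \<ge> 0"
      and hte: "height t n = h - x" using t by (auto simp: pre_def)
    have e: "height (t @ [x]) (Suc n) = h" using height_snoc_end[of t x] lt hte by simp
    have "\<forall>j\<le>Suc n. height (t @ [x]) j \<ge> 0"
    proof (intro allI impI)
      fix j assume "j \<le> Suc n"
      then consider "j \<le> n" | "j = Suc n" by linarith
      then show "height (t @ [x]) j \<ge> 0"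
        by cases (use ht lt height_snoc e assms in auto)
    qed
    then show ?thesis using lt tt x e by (auto simp: pre_def)
  qed
  show "(\<lambda>s. s @ [1]) ` pre n (h-1) \<union> (\<lambda>s. s @ [-2]) ` pre n (h+2) \<subseteq> pre (Suc n) h"
    using gen[of _ 1] gen[of _ "-2"] by auto
qed

lemma snoc_sum:
  assumes "\<And>s. s \<in> A \<Longrightarrow> height s n = h - x" "\<And>s. s \<in> A \<Longrightarrow> length s = n"
  shows "(\<Sum>s\<in>(\<lambda>s. s @ [x]) ` A. path_area s) = (\<Sum>s\<in>A. path_area s) + h * int (card A)"
proof -
  have inj: "inj_on (\<lambda>s. s @ [x]) A" by (auto simp: inj_on_def)
  have "(\<Sum>s\<in>(\<lambda>s. s @ [x]) ` A. path_area s) = (\<Sum>s\<in>A. path_area (s @ [x]))"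
    by (rule sum.reindex[OF inj, unfolded comp_def])
  also have "\<dots> = (\<Sum>s\<in>A. path_area s + h)"
  proof (rule sum.cong)
    fix s assume "s \<in> A"
    then show "path_area (s @ [x]) = path_area s + h"
      using area_snoc[of s x] height_snoc_end[of s x] assms by simp
  qed simp
  also have "\<dots> = (\<Sum>s\<in>A. path_area s) + h * int (card A)"
    by (simp add: sum.distrib)
  finally show ?thesis .
qed

lemma main: "3*d+h = n \<Longrightarrow> int (card (pre n (int h))) = fc d h \<and> (\<Sum>s\<in>pre n (int h). path_area s) = Pc d h"
proof (induction n arbitrary: d h)
  case 0
  then have "d = 0" "h = 0" by auto
  then show ?case by (simp add: pre_0 fc_def Pc_def W_def path_area_def height_def)
next
  case (Suc n)
  define A where "A = pre n (int h - 1)"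
  define B where "B = pre n (int h + 2)"
  have dec: "pre (Suc n) (int h) = (\<lambda>s. s @ [1]) ` A \<union> (\<lambda>s. s @ [-2]) ` B"
    unfolding A_def B_def by (rule pre_Suc) simp
  have fA: "finite A" "finite B" unfolding A_def B_def by (rule pre_fin)+
  have disj: "(\<lambda>s. s @ [1::int]) ` A \<inter> (\<lambda>s. s @ [-2]) ` B = {}" by auto
  have cardU: "card (pre (Suc n) (int h)) = card A + card B"
    unfolding dec using fA disj
    by (simp add: card_Un_disjoint card_image inj_on_def)
  have sumU: "(\<Sum>s\<in>pre (Suc n) (int h). path_area s) =
      ((\<Sum>s\<in>A. path_area s) + int h * int (card A)) + ((\<Sum>s\<in>B. path_area s) + int h * int (card B))"
  proof -
    have "(\<Sum>s\<in>pre (Suc n) (int h). path_area s) =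
        (\<Sum>s\<in>(\<lambda>s. s @ [1]) ` A. path_area s) + (\<Sum>s\<in>(\<lambda>s. s @ [-2]) ` B. path_area s)"
      unfolding dec using fA disj by (simp add: sum.union_disjoint)
    also have "(\<Sum>s\<in>(\<lambda>s. s @ [1]) ` A. path_area s) = (\<Sum>s\<in>A. path_area s) + int h * int (card A)"
      by (rule snoc_sum) (auto simp: A_def pre_def)
    also have "(\<Sum>s\<in>(\<lambda>s. s @ [-2]) ` B. path_area s) = (\<Sum>s\<in>B. path_area s) + int h * int (card B)"
      by (rule snoc_sum) (auto simp: B_def pre_def)
    finally show ?thesis .
  qed
  have IA: "int (card A) = (if h \<ge> 1 then fc d (h-1) else 0) \<and>
            (\<Sum>s\<in>A. path_area s) = (if h \<ge> 1 then Pc d (h-1) else 0)"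
  proof (cases "h \<ge> 1")
    case True
    then have "int h - 1 = int (h-1)" by simp
    moreover have "3*d+(h-1) = n" using Suc.prems True by simp
    ultimately show ?thesis using Suc.IH[of d "h-1"] True unfolding A_def by simp
  next
    case False
    then have "A = {}" unfolding A_def by (intro pre_neg) simp
    then show ?thesis using False by simp
  qed
  have IB: "int (card B) = (if d \<ge> 1 then fc (d-1) (h+2) else 0) \<and>
            (\<Sum>s\<in>B. path_area s) = (if d \<ge> 1 then Pc (d-1) (h+2) else 0)"
  proof (cases "d \<ge> 1")
    case True
    have "int h + 2 = int (h+2)" by simp
    moreover have "3*(d-1)+(h+2) = n" using Suc.prems True by simp
    ultimately show ?thesis using Suc.IH[of "d-1" "h+2"] True unfolding B_def by (simp add: add.commute)
  next
    case False
    then have "B = {}" unfolding B_def using Suc.prems by (intro pre_big) simp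
    then show ?thesis using False by simp
  qed
  have ge: "3*d+h \<ge> 1" using Suc.prems by simp
  show ?case
  proof
    show "int (card (pre (Suc n) (int h))) = fc d h"
      using cardU IA IB fc_rec[OF ge] by simp
    show "(\<Sum>s\<in>pre (Suc n) (int h). path_area s) = Pc d h"
      using sumU IA IB fc_rec[OF ge] Pc_rec[OF ge] cardU by (simp add: algebra_simps)
  qed
qed

theorem mainTheorem3:
  fixes N :: nat
  assumes "N \<ge> 1"
  shows "total_area N = (\<Sum>k=0..N-1. 3 ^ (k+1) * int ((3*N - k) choose (N - 1 - k)))"
proof -
  have tp: "ternary_paths N = pre (3*N) 0" unfolding ternary_paths_def pre_def by simp
  have "total_area N = Pc N 0"
    using main[of N 0 "3*N"] unfolding total_area_def tp by simp
  also have "\<dots> = 3 * L (3*N) (N-1)"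
    using assms by (simp add: Pc_def W_def)
  also have "\<dots> = 3 * R (3*N) (N-1)"
    using L_R[of "N-1" "3*N"] by simp
  also have "\<dots> = (\<Sum>k=0..N-1. 3 ^ (k+1) * int ((3*N - k) choose (N - 1 - k)))"
    unfolding R_def by (simp add: sum_distrib_left atLeast0AtMost mult.assoc)
  finally show ?thesis .
qed

end
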